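(* Let $m,n\ge1$ and consider the product of simplices $\Delta^{m-1}\times\Delta^{n-1}\subset\mathbb{R}^m\times\mathbb{R}^n$. Given any subdivision of the vertices of $\Delta^{m-1}\times\Delta^{n-1}$ and any interior cell $C$ of this subdivision, there exist positive real weights $w_1,\dots,w_m$ with $\sum_i w_i=1$ such that $C$ contains the point $(w_1,\dots,w_m,\tfrac1n\mathbf{1}_n)$ in its relative interior.
   Context: $\Delta^{k-1}=\mathrm{conv}(e_1,\dots,e_k)\subset\mathbb{R}^k$ is the standard simplex, so the vertices of $\Delta^{m-1}\times\Delta^{n-1}$ are the points $(e_i,e_j)$. A subdivision of the vertices is a polyhedral subdivision of $\Delta^{m-1}\times\Delta^{n-1}$ whose cells are convex hulls of subsets of these vertices (cells cover the product, and any two intersect in a common face). A cell is interior if it is not contained in any facet of $\Delta^{m-1}\times\Delta^{n-1}$. $\mathbf{1}_n$ is the all-ones vector. *)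

theory Defs
  imports "HOL-Analysis.Analysis"
begin

definition std_simplex :: "(real^'k) set" where
  "std_simplex = convex hull {axis i 1 | i. True}"

definition prod_simplex :: "((real^'m) \<times> (real^'n)) set" where
  "prod_simplex = std_simplex \<times> std_simplex"

definition prod_vertices :: "((real^'m) \<times> (real^'n)) set" where
  "prod_vertices = {(axis i 1, axis j 1) | i j. True}"

definition vertex_subdivision :: "((real^'m) \<times> (real^'n)) set set \<Rightarrow> bool" where
  "vertex_subdivision \<C> \<longleftrightarrow>
     finite \<C> \<and>
     (\<forall>C\<in>\<C>. C \<noteq> {} \<and> (\<exists>V. V \<subseteq> prod_vertices \<and> C = convex hull V)) \<and>
     \<Union>\<C> = prod_simplex \<and>
     (\<forall>C\<in>\<C>. \<forall>D\<in>\<C>. (C \<inter> D) face_of C \<and> (C \<inter> D) face_of D)"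

definition interior_cell :: "((real^'m) \<times> (real^'n)) set \<Rightarrow> bool" where
  "interior_cell C \<longleftrightarrow> \<not> (\<exists>F. F facet_of prod_simplex \<and> C \<subseteq> F)"

end

theory Submission
  imports Defs
begin

lemma prod_simplex_hull:
  "(prod_simplex :: ((real^'m) \<times> (real^'n)) set) = convex hull prod_vertices"
proof -
  have e: "(prod_vertices :: ((real^'m) \<times> (real^'n)) set) = {axis i 1 | i. True} \<times> {axis j 1 | j. True}"
    unfolding prod_vertices_def by auto
  show ?thesis
    unfolding prod_simplex_def std_simplex_def e by (simp add: convex_hull_Times)
qed

lemma finite_prod_vertices: "finite (prod_vertices :: ((real^'m) \<times> (real^'n)) set)"
proof -
  have e: "(prod_vertices :: ((real^'m) \<times> (real^'n)) set) = (\<lambda>(i,j). (axis i 1, axis j 1)) ` (UNIV :: ('m \<times> 'n) set)"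
    unfolding prod_vertices_def by auto
  show ?thesis unfolding e by simp
qed

lemma no_face_contains:
  fixes C V :: "((real^'m) \<times> (real^'n)) set"
  assumes ic: "interior_cell C" and CV: "C = convex hull V" and Vs: "V \<subseteq> prod_vertices"
    and nn: "\<forall>v\<in>prod_vertices. a \<bullet> v \<ge> 0"
    and u: "u \<in> prod_vertices" "a \<bullet> u = 0"
    and u': "u' \<in> prod_vertices" "a \<bullet> u' \<noteq> 0"
    and V0: "\<forall>v\<in>V. a \<bullet> v = 0"
  shows False
proof -
  let ?S = "prod_simplex :: ((real^'m) \<times> (real^'n)) set"
  let ?F = "?S \<inter> {x. a \<bullet> x = 0}"
  have cS: "convex ?S" by (simp add: prod_simplex_hull)
  have ge: "\<And>x. x \<in> ?S \<Longrightarrow> a \<bullet> x \<ge> 0"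
  proof -
    have "?S \<subseteq> {x. a \<bullet> x \<ge> 0}"
      unfolding prod_simplex_hull
    proof (rule hull_minimal)
      show "prod_vertices \<subseteq> {x. a \<bullet> x \<ge> 0}" using nn by blast
      show "convex {x. a \<bullet> x \<ge> 0}" by (rule convex_halfspace_ge)
    qed
    then show "\<And>x. x \<in> ?S \<Longrightarrow> a \<bullet> x \<ge> 0" by auto
  qed
  have face: "?F face_of ?S"
    by (rule face_of_Int_supporting_hyperplane_ge[OF cS ge])
  have poly: "polyhedron ?S"
    by (simp add: prod_simplex_hull polytope_convex_hull finite_prod_vertices polytope_imp_polyhedron)
  have PS: "prod_vertices \<subseteq> ?S" unfolding prod_simplex_hull by (rule hull_subset)
  have uS: "u \<in> ?S" "u' \<in> ?S" using u(1) u'(1) PS by blast+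
  have ne: "?F \<noteq> {}" using uS u by auto
  have neq: "?F \<noteq> ?S" using uS u' by auto
  obtain F where F: "F facet_of ?S" "?F \<subseteq> F"
    using face_of_polyhedron_subset_facet[OF poly face ne neq] by blast
  have "C \<subseteq> ?F"
    unfolding CV
  proof (rule hull_minimal)
    show "V \<subseteq> ?F" using Vs V0 PS by blast
    show "convex ?F" by (rule face_of_imp_convex[OF face])
  qed
  then show False using ic F unfolding interior_cell_def by blast
qed

theorem proposition3p2:
  fixes \<C> :: "((real^'m) \<times> (real^'n)) set set" and C :: "((real^'m) \<times> (real^'n)) set"
  assumes "vertex_subdivision \<C>" and "C \<in> \<C>" and "interior_cell C"
  shows "\<exists>w :: 'm \<Rightarrow> real. (\<forall>i. w i > 0) \<and> (\<Sum>i\<in>UNIV. w i) = 1 \<and>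
           ((\<chi> i. w i), (\<chi> j. 1 / real CARD('n))) \<in> rel_interior C"
proof -
  have "\<forall>C\<in>\<C>. C \<noteq> {} \<and> (\<exists>V. V \<subseteq> prod_vertices \<and> C = convex hull V)"
    using assms(1) unfolding vertex_subdivision_def by (elim conjE)
  then have "C \<noteq> {} \<and> (\<exists>V. V \<subseteq> prod_vertices \<and> C = convex hull V)"
    using assms(2) by (rule bspec)
  then obtain V where Vs: "V \<subseteq> prod_vertices" and CV: "C = convex hull V" and Cne: "C \<noteq> {}"
    by (elim conjE exE)
  have Vne: "V \<noteq> {}" using Cne CV by auto
  define f :: "'m \<times> 'n \<Rightarrow> (real^'m) \<times> (real^'n)" where "f = (\<lambda>(i,j). (axis i 1, axis j 1))"
  define E where "E = {e. f e \<in> V}"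
  have VE: "V = f ` E"
  proof
    show "f ` E \<subseteq> V" unfolding E_def by blast
    show "V \<subseteq> f ` E"
    proof
      fix v assume v: "v \<in> V"
      then have "v \<in> prod_vertices" using Vs by blast
      then obtain i j where "v = (axis i 1, axis j 1)" unfolding prod_vertices_def by blast
      then have "v = f (i,j)" unfolding f_def by simp
      then show "v \<in> f ` E" using v unfolding E_def by blast
    qed
  qed
  have finE: "finite E" by simp
  have fv: "f e \<in> prod_vertices" for e unfolding f_def prod_vertices_def by (auto split: prod.splits)
  have colcov: "\<exists>i. (i,j) \<in> E" for j
  proof (rule ccontr)
    assume nj: "\<not> (\<exists>i. (i,j) \<in> E)"
    obtain e0 where e0: "e0 \<in> E" using Vne VE by blast
    show False
    proof (cases "\<exists>k. k \<noteq> j")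
      case False
      then have "snd e0 = j" by blast
      then show False using nj e0 by (metis prod.collapse)
    next
      case True
      then obtain k where k: "k \<noteq> j" by blast
      let ?a = "(0 :: real^'m, axis j (1::real))"
      show False
      proof (rule no_face_contains[OF assms(3) CV Vs, of ?a "f (fst e0, k)" "f (fst e0, j)"])
        show "\<forall>v\<in>prod_vertices. 0 \<le> ?a \<bullet> v"
          unfolding prod_vertices_def by (auto simp: inner_Pair inner_axis_axis)
        show "f (fst e0, k) \<in> prod_vertices" "f (fst e0, j) \<in> prod_vertices" using fv by auto
        show "?a \<bullet> f (fst e0, k) = 0" using k by (simp add: f_def inner_Pair inner_axis_axis)
        show "?a \<bullet> f (fst e0, j) \<noteq> 0" by (simp add: f_def inner_Pair inner_axis_axis)
        show "\<forall>v\<in>V. ?a \<bullet> v = 0"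
          using nj unfolding VE f_def by (auto simp: inner_Pair inner_axis_axis)
      qed
    qed
  qed
  have rowcov: "\<exists>j. (i,j) \<in> E" for i
  proof (rule ccontr)
    assume ni: "\<not> (\<exists>j. (i,j) \<in> E)"
    obtain e0 where e0: "e0 \<in> E" using Vne VE by blast
    show False
    proof (cases "\<exists>k. k \<noteq> i")
      case False
      then have "fst e0 = i" by blast
      then show False using ni e0 by (metis prod.collapse)
    next
      case True
      then obtain k where k: "k \<noteq> i" by blast
      let ?a = "(axis i (1::real), 0 :: real^'n)"
      show False
      proof (rule no_face_contains[OF assms(3) CV Vs, of ?a "f (k, snd e0)" "f (i, snd e0)"])
        show "\<forall>v\<in>prod_vertices. 0 \<le> ?a \<bullet> v"
          unfolding prod_vertices_def by (auto simp: inner_Pair inner_axis_axis)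
        show "f (k, snd e0) \<in> prod_vertices" "f (i, snd e0) \<in> prod_vertices" using fv by auto
        show "?a \<bullet> f (k, snd e0) = 0" using k by (simp add: f_def inner_Pair inner_axis_axis)
        show "?a \<bullet> f (i, snd e0) \<noteq> 0" by (simp add: f_def inner_Pair inner_axis_axis)
        show "\<forall>v\<in>V. ?a \<bullet> v = 0"
          using ni unfolding VE f_def by (auto simp: inner_Pair inner_axis_axis)
      qed
    qed
  qed
  define N where "N = real CARD('n)"
  have Npos: "N > 0" unfolding N_def by simp
  define d where "d j = card {e \<in> E. snd e = j}" for j
  have dpos: "d j > 0" for j
  proof -
    obtain i where "(i,j) \<in> E" using colcov by blast
    then have "{e \<in> E. snd e = j} \<noteq> {}" by force
    then show ?thesis unfolding d_def using finE by (simp add: card_gt_0_iff)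
  qed
  define c where "c (e::'m \<times> 'n) = 1 / (N * real (d (snd e)))" for e
  have cpos: "c e > 0" for e unfolding c_def using Npos dpos[of "snd e"] by simp
  have colsum: "(\<Sum>e\<in>{e \<in> E. snd e = j}. c e) = 1 / N" for j
  proof -
    have "(\<Sum>e\<in>{e \<in> E. snd e = j}. c e) = (\<Sum>e\<in>{e \<in> E. snd e = j}. 1 / (N * real (d j)))"
      by (rule sum.cong) (auto simp: c_def)
    also have "\<dots> = real (d j) * (1 / (N * real (d j)))" by (simp add: d_def)
    also have "\<dots> = 1 / N" using dpos[of j] Npos by (simp add: field_simps)
    finally show ?thesis .
  qed
  have sndE: "snd ` E = UNIV" using colcov by force
  have fstE: "fst ` E = UNIV" using rowcov by force
  have csum: "sum c E = 1"
  proof -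
    have "sum c E = (\<Sum>j\<in>snd ` E. sum c {e \<in> E. snd e = j})"
      by (rule sum.image_gen[OF finE])
    also have "\<dots> = (\<Sum>j\<in>(UNIV::'n set). 1 / N)" using colsum sndE by simp
    also have "\<dots> = 1" using Npos by (simp add: N_def)
    finally show ?thesis .
  qed
  define p where "p = (\<Sum>e\<in>E. c e *\<^sub>R f e)"
  have sndp: "snd p $ j = 1 / N" for j
  proof -
    have "snd p $ j = (\<Sum>e\<in>E. c e * (if snd e = j then 1 else 0))"
      unfolding p_def snd_sum sum_component f_def
      by (rule sum.cong) (auto split: prod.splits simp: axis_def)
    also have "\<dots> = (\<Sum>e\<in>{e \<in> E. snd e = j}. c e)"
      by (simp add: sum.inter_filter[OF finE, symmetric] if_distrib cong: if_cong)
    finally show ?thesis using colsum by simp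
  qed
  have fstp: "fst p $ i = (\<Sum>e\<in>{e \<in> E. fst e = i}. c e)" for i
  proof -
    have "fst p $ i = (\<Sum>e\<in>E. c e * (if fst e = i then 1 else 0))"
      unfolding p_def fst_sum sum_component f_def
      by (rule sum.cong) (auto split: prod.splits simp: axis_def)
    also have "\<dots> = (\<Sum>e\<in>{e \<in> E. fst e = i}. c e)"
      by (simp add: sum.inter_filter[OF finE, symmetric] if_distrib cong: if_cong)
    finally show ?thesis .
  qed
  have wpos: "fst p $ i > 0" for i
  proof -
    obtain j where "(i,j) \<in> E" using rowcov by blast
    then have "{e \<in> E. fst e = i} \<noteq> {}" by force
    then show ?thesis unfolding fstp using finE cpos
      by (intro sum_pos) auto
  qed
  have wsum: "(\<Sum>i\<in>UNIV. fst p $ i) = 1"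
  proof -
    have "sum c E = (\<Sum>i\<in>fst ` E. sum c {e \<in> E. fst e = i})"
      by (rule sum.image_gen[OF finE])
    then show ?thesis using csum fstE fstp by simp
  qed
  have relint: "p \<in> rel_interior C"
  proof -
    have u: "\<Union>((\<lambda>e. {f e}) ` E) = f ` E" by blast
    have "C = convex hull (\<Union>((\<lambda>e. {f e}) ` E))" unfolding CV VE u ..
    then have ri: "rel_interior C = {sum (\<lambda>e. c' e *\<^sub>R s e) E | c' s. (\<forall>e\<in>E. c' e > 0) \<and> sum c' E = 1 \<and>
      (\<forall>e\<in>E. s e \<in> rel_interior {f e})}"
      using rel_interior_convex_hull_union[OF finE, of "\<lambda>e. {f e}"] by simp
    have "p \<in> {sum (\<lambda>e. c' e *\<^sub>R s e) E | c' s. (\<forall>e\<in>E. c' e > 0) \<and> sum c' E = 1 \<and>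
      (\<forall>e\<in>E. s e \<in> rel_interior {f e})}"
      unfolding p_def
      by (rule CollectI, rule exI[of _ c], rule exI[of _ f]) (simp add: cpos csum)
    then show ?thesis unfolding ri .
  qed
  have eq: "((\<chi> i. fst p $ i), (\<chi> j. 1 / real CARD('n))) = p"
    using sndp by (simp add: vec_eq_iff prod_eq_iff N_def)
  have "(\<forall>i. fst p $ i > 0) \<and> (\<Sum>i\<in>UNIV. fst p $ i) = 1 \<and>
           ((\<chi> i. fst p $ i), (\<chi> j. 1 / real CARD('n))) \<in> rel_interior C"
    unfolding eq using wpos wsum relint by blast
  then show ?thesis by (rule exI[of _ "\<lambda>i. fst p $ i"])
qed

end
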